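(* Let $n\geq 2$. There is a nonempty Zariski open subset $U\subset\mathbb{R}^n$ such that for every $v\in U$, we have $\max_H|H\cap S_nv|=(n-1)!$, where $H$ ranges over all hyperplanes in $\mathbb{R}^n$ (through the origin).
   Context: The symmetric group $S_n$ acts on $\mathbb{R}^n$ by permuting coordinates; $S_nv$ denotes the orbit of $v$. *)

theory Defs
  imports "HOL-Analysis.Analysis" "HOL-Combinatorics.Permutations"
begin

definition poly_fun :: "(real ^ 'n \<Rightarrow> real) \<Rightarrow> bool" where
  "poly_fun f \<longleftrightarrow> (\<exists>(C :: ('n \<Rightarrow> nat) set) c. finite C \<and>
      f = (\<lambda>x. \<Sum>\<alpha>\<in>C. c \<alpha> * (\<Prod>i\<in>UNIV. (x $ i) ^ (\<alpha> i))))"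

definition zariski_closed :: "(real ^ 'n) set \<Rightarrow> bool" where
  "zariski_closed Z \<longleftrightarrow> (\<exists>P. (\<forall>p\<in>P. poly_fun p) \<and> Z = {x. \<forall>p\<in>P. p x = 0})"

definition zariski_open :: "(real ^ 'n) set \<Rightarrow> bool" where
  "zariski_open U \<longleftrightarrow> zariski_closed (- U)"

definition sym_orbit :: "real ^ 'n \<Rightarrow> (real ^ 'n) set" where
  "sym_orbit v = {(\<chi> i. v $ (\<sigma> i)) | \<sigma>. \<sigma> permutes (UNIV :: 'n set)}"

definition lin_hyperplane :: "(real ^ 'n) set \<Rightarrow> bool" where
  "lin_hyperplane H \<longleftrightarrow> (\<exists>a. a \<noteq> 0 \<and> H = {x. a \<bullet> x = 0})"

end

theory Submission
  imports Defs "HOL-Computational_Algebra.Polynomial"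
begin

definition mnm :: "('n \<Rightarrow> nat) \<Rightarrow> real ^ 'n \<Rightarrow> real" where
  "mnm \<alpha> x = (\<Prod>i\<in>UNIV. (x $ i) ^ (\<alpha> i))"

lemma poly_fun_alt: "poly_fun f \<longleftrightarrow> (\<exists>C c. finite C \<and> f = (\<lambda>x. \<Sum>\<alpha>\<in>C. c \<alpha> * mnm \<alpha> x))"
  unfolding poly_fun_def mnm_def by simp

lemma poly_fun_term: "poly_fun (\<lambda>x. k * mnm \<alpha> x)"
  unfolding poly_fun_alt
  by (rule exI[of _ "{\<alpha>}"], rule exI[of _ "\<lambda>_. k"]) simp

lemma poly_fun_const: "poly_fun (\<lambda>x. k)"
proof -
  have "(\<lambda>x::real^'a. k) = (\<lambda>x. k * mnm (\<lambda>_. 0) x)" by (simp add: mnm_def)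
  then show ?thesis using poly_fun_term by metis
qed

lemma poly_fun_coord: "poly_fun (\<lambda>x. x $ j)"
proof -
  have "(\<lambda>x::real^'a. x $ j) = (\<lambda>x. 1 * mnm (\<lambda>i. if i = j then 1 else 0) x)"
  proof
    fix x :: "real^'a"
    have "(\<Prod>i\<in>UNIV. x $ i ^ (if i = j then 1 else 0)) = (\<Prod>i\<in>UNIV. if i = j then x $ i else 1)"
      by (rule prod.cong) auto
    also have "\<dots> = x $ j" by (simp add: prod.delta)
    finally show "x $ j = 1 * mnm (\<lambda>i. if i = j then 1 else 0) x" by (simp add: mnm_def)
  qed
  then show ?thesis using poly_fun_term by metis
qed

lemma poly_fun_add:
  assumes "poly_fun p" "poly_fun q" shows "poly_fun (\<lambda>x. p x + q x)"
proof -
  obtain C1 c1 where 1: "finite C1" "p = (\<lambda>x. \<Sum>\<alpha>\<in>C1. c1 \<alpha> * mnm \<alpha> x)"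
    using assms(1) unfolding poly_fun_alt by auto
  obtain C2 c2 where 2: "finite C2" "q = (\<lambda>x. \<Sum>\<alpha>\<in>C2. c2 \<alpha> * mnm \<alpha> x)"
    using assms(2) unfolding poly_fun_alt by auto
  let ?c = "\<lambda>\<alpha>. (if \<alpha> \<in> C1 then c1 \<alpha> else 0) + (if \<alpha> \<in> C2 then c2 \<alpha> else 0)"
  have "(\<lambda>x. p x + q x) = (\<lambda>x. \<Sum>\<alpha>\<in>C1 \<union> C2. ?c \<alpha> * mnm \<alpha> x)"
  proof
    fix x
    have a: "(\<Sum>\<alpha>\<in>C1. c1 \<alpha> * mnm \<alpha> x) = (\<Sum>\<alpha>\<in>C1 \<union> C2. (if \<alpha> \<in> C1 then c1 \<alpha> else 0) * mnm \<alpha> x)"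
      by (rule sum.mono_neutral_cong_left) (use 1 2 in simp_all)
    have b: "(\<Sum>\<alpha>\<in>C2. c2 \<alpha> * mnm \<alpha> x) = (\<Sum>\<alpha>\<in>C1 \<union> C2. (if \<alpha> \<in> C2 then c2 \<alpha> else 0) * mnm \<alpha> x)"
      by (rule sum.mono_neutral_cong_left) (use 1 2 in simp_all)
    show "p x + q x = (\<Sum>\<alpha>\<in>C1 \<union> C2. ?c \<alpha> * mnm \<alpha> x)"
      unfolding 1 2 a b sum.distrib[symmetric] by (rule sum.cong) (simp_all add: distrib_right)
  qed
  then show ?thesis unfolding poly_fun_alt using 1(1) 2(1) by (intro exI[of _ "C1 \<union> C2"] exI[of _ ?c]) simp
qed

lemma poly_fun_sum:
  assumes "finite S" "\<And>s. s \<in> S \<Longrightarrow> poly_fun (f s)"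
  shows "poly_fun (\<lambda>x. \<Sum>s\<in>S. f s x)"
  using assms
proof (induction S rule: finite_induct)
  case empty then show ?case using poly_fun_const[of 0] by simp
next
  case (insert a F) then show ?case by (simp add: poly_fun_add)
qed

lemma mnm_add: "mnm \<alpha> x * mnm \<beta> x = mnm (\<lambda>i. \<alpha> i + \<beta> i) x"
  unfolding mnm_def by (simp add: prod.distrib[symmetric] power_add)

lemma poly_fun_mult:
  assumes "poly_fun p" "poly_fun q" shows "poly_fun (\<lambda>x. p x * q x)"
proof -
  obtain C1 c1 where 1: "finite C1" "p = (\<lambda>x. \<Sum>\<alpha>\<in>C1. c1 \<alpha> * mnm \<alpha> x)"
    using assms(1) unfolding poly_fun_alt by auto
  obtain C2 c2 where 2: "finite C2" "q = (\<lambda>x. \<Sum>\<alpha>\<in>C2. c2 \<alpha> * mnm \<alpha> x)"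
    using assms(2) unfolding poly_fun_alt by auto
  have "(\<lambda>x. p x * q x) = (\<lambda>x. \<Sum>\<alpha>\<in>C1. \<Sum>\<beta>\<in>C2. (c1 \<alpha> * c2 \<beta>) * mnm (\<lambda>i. \<alpha> i + \<beta> i) x)"
    unfolding 1 2 by (simp add: sum_product mnm_add[symmetric] mult_ac)
  moreover have "poly_fun (\<lambda>x. \<Sum>\<alpha>\<in>C1. \<Sum>\<beta>\<in>C2. (c1 \<alpha> * c2 \<beta>) * mnm (\<lambda>i. \<alpha> i + \<beta> i) x)"
    using 1 2 by (intro poly_fun_sum poly_fun_term) auto
  ultimately show ?thesis by simp
qed

lemma poly_fun_prod:
  assumes "finite S" "\<And>s. s \<in> S \<Longrightarrow> poly_fun (f s)"
  shows "poly_fun (\<lambda>x. \<Prod>s\<in>S. f s x)"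
  using assms
proof (induction S rule: finite_induct)
  case empty then show ?case using poly_fun_const[of 1] by simp
next
  case (insert a F) then show ?case by (simp add: poly_fun_mult)
qed

lemma poly_fun_diff:
  assumes "poly_fun p" "poly_fun q" shows "poly_fun (\<lambda>x. p x - q x)"
proof -
  have "poly_fun (\<lambda>x. p x + (-1) * q x)"
    by (intro poly_fun_add poly_fun_mult poly_fun_const assms)
  then show ?thesis by simp
qed

lemma poly_fun_line:
  assumes "poly_fun p"
  shows "\<exists>P. \<forall>t. p (x + t *\<^sub>R (y - x)) = poly P t"
proof -
  obtain C c where 1: "finite C" "p = (\<lambda>x. \<Sum>\<alpha>\<in>C. c \<alpha> * mnm \<alpha> x)"
    using assms unfolding poly_fun_alt by blast
  define P where "P = (\<Sum>\<alpha>\<in>C. [:c \<alpha>:] * (\<Prod>i\<in>UNIV. [:x $ i, y $ i - x $ i:] ^ (\<alpha> i)))"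
  have "\<forall>t. p (x + t *\<^sub>R (y - x)) = poly P t"
  proof
    fix t
    show "p (x + t *\<^sub>R (y - x)) = poly P t"
      unfolding 1 P_def poly_sum poly_mult poly_prod poly_power mnm_def
      by (intro sum.cong refl arg_cong2[where f="(*)"] prod.cong arg_cong2[where f="power"]) (simp_all add: algebra_simps)
  qed
  then show ?thesis by blast
qed

definition nzp :: "(real ^ 'n \<Rightarrow> real) \<Rightarrow> bool" where
  "nzp f \<longleftrightarrow> poly_fun f \<and> (\<exists>x. f x \<noteq> 0)"

lemma nzp_mult:
  assumes "nzp p" "nzp q" shows "nzp (\<lambda>x. p x * q x)"
proof -
  obtain x where x: "p x \<noteq> 0" using assms(1) unfolding nzp_def by auto
  obtain y where y: "q y \<noteq> 0" using assms(2) unfolding nzp_def by auto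
  have pp: "poly_fun p" "poly_fun q" using assms unfolding nzp_def by auto
  obtain P where P: "\<And>t. p (x + t *\<^sub>R (y - x)) = poly P t"
    using poly_fun_line[OF pp(1), of x y] by auto
  obtain Q where Q: "\<And>t. q (x + t *\<^sub>R (y - x)) = poly Q t"
    using poly_fun_line[OF pp(2), of x y] by auto
  have "poly P 0 = p x" using P[of 0] by simp
  then have "P \<noteq> 0" using x by auto
  have "poly Q 1 = q y" using Q[of 1] by simp
  then have "Q \<noteq> 0" using y by auto
  have fin: "finite ({t. poly P t = 0} \<union> {t. poly Q t = 0})"
    using poly_roots_finite[OF \<open>P \<noteq> 0\<close>] poly_roots_finite[OF \<open>Q \<noteq> 0\<close>] by simp
  obtain t :: real where "t \<notin> {t. poly P t = 0} \<union> {t. poly Q t = 0}"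
    using ex_new_if_finite[OF infinite_UNIV_char_0 fin] by auto
  then have "p (x + t *\<^sub>R (y - x)) * q (x + t *\<^sub>R (y - x)) \<noteq> 0" using P Q by simp
  then show ?thesis using poly_fun_mult[OF pp] unfolding nzp_def by blast
qed

lemma nzp_prod:
  assumes "finite S" "\<And>s. s \<in> S \<Longrightarrow> nzp (f s)"
  shows "nzp (\<lambda>x. \<Prod>s\<in>S. f s x)"
  using assms
proof (induction S rule: finite_induct)
  case empty then show ?case using poly_fun_const[of 1] by (simp add: nzp_def)
next
  case (insert a F) then show ?case using nzp_mult[of "f a" "\<lambda>x. \<Prod>s\<in>F. f s x"] by simp
qed

definition RR :: "'n set \<Rightarrow> ('n \<Rightarrow> 'n) \<Rightarrow> real^'n \<Rightarrow> real^'n" where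
  "RR I \<sigma> x = (\<chi> i. if i \<in> I then x $ (\<sigma> i) else 0)"

definition DS :: "'n set \<Rightarrow> ('n \<Rightarrow> 'n) set \<Rightarrow> real^'n \<Rightarrow> bool" where
  "DS I A x \<longleftrightarrow> (\<forall>a::real^'n. (\<forall>i. i \<notin> I \<longrightarrow> a $ i = 0) \<longrightarrow>
      (\<forall>\<sigma>\<in>A. (\<Sum>i\<in>I. a $ i * x $ (\<sigma> i)) = 0) \<longrightarrow> a = 0)"

definition GM :: "'n set \<Rightarrow> ('n \<Rightarrow> 'n) set \<Rightarrow> real^'n \<Rightarrow> real^'n^'n" where
  "GM I A x = (\<chi> i i'. (\<Sum>\<sigma>\<in>A. RR I \<sigma> x $ i * RR I \<sigma> x $ i') + (if i = i' \<and> i \<notin> I then 1 else 0))"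

definition GG :: "'n set \<Rightarrow> ('n \<Rightarrow> 'n) set \<Rightarrow> real^'n \<Rightarrow> real" where
  "GG I A x = det (GM I A x)"

lemma RR_poly: "poly_fun (\<lambda>x. RR I \<sigma> x $ i)"
proof (cases "i \<in> I")
  case True
  then show ?thesis by (simp add: RR_def poly_fun_coord)
next
  case False
  then show ?thesis by (simp add: RR_def poly_fun_const)
qed

lemma GG_poly:
  fixes I :: "'n::finite set"
  assumes "finite A" shows "poly_fun (GG I A)"
proof -
  have e: "poly_fun (\<lambda>x. GM I A x $ i $ i')" for i i'
  proof -
    have "(\<lambda>x. GM I A x $ i $ i') = (\<lambda>x. (\<Sum>\<sigma>\<in>A. RR I \<sigma> x $ i * RR I \<sigma> x $ i') + (if i = i' \<and> i \<notin> I then 1 else 0))"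
      by (simp add: GM_def)
    moreover have "poly_fun (\<lambda>x. (\<Sum>\<sigma>\<in>A. RR I \<sigma> x $ i * RR I \<sigma> x $ i') + (if i = i' \<and> i \<notin> I then 1 else 0))"
      using assms by (intro poly_fun_add poly_fun_sum poly_fun_mult RR_poly poly_fun_const)
    ultimately show ?thesis by simp
  qed
  have "poly_fun (\<lambda>x. \<Sum>p\<in>{p. p permutes (UNIV::'n set)}. of_int (sign p) * (\<Prod>i\<in>UNIV. GM I A x $ i $ p i))"
    by (intro poly_fun_sum poly_fun_mult poly_fun_const poly_fun_prod e) (simp_all add: finite_permutations)
  then show ?thesis unfolding GG_def det_def by (simp add: fun_eq_iff)
qed

lemma RR_dot: "RR I \<sigma> x \<bullet> a = (\<Sum>i\<in>I. a $ i * x $ (\<sigma> i))"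
proof -
  have "RR I \<sigma> x \<bullet> a = (\<Sum>i\<in>UNIV. if i \<in> I then a $ i * x $ (\<sigma> i) else 0)"
    unfolding inner_vec_def RR_def by (intro sum.cong) auto
  also have "\<dots> = (\<Sum>i\<in>I. a $ i * x $ (\<sigma> i))"
    by (simp add: sum.If_cases)
  finally show ?thesis .
qed

lemma GM_mult:
  "GM I A x *v a = (\<Sum>\<sigma>\<in>A. (RR I \<sigma> x \<bullet> a) *\<^sub>R RR I \<sigma> x) + (\<chi> i. if i \<notin> I then a $ i else 0)"
proof -
  have "(GM I A x *v a) $ i = ((\<Sum>\<sigma>\<in>A. (RR I \<sigma> x \<bullet> a) *\<^sub>R RR I \<sigma> x) + (\<chi> i. if i \<notin> I then a $ i else 0)) $ i" for i
  proof -
    have "(GM I A x *v a) $ i = (\<Sum>j\<in>UNIV. (\<Sum>\<sigma>\<in>A. RR I \<sigma> x $ i * RR I \<sigma> x $ j) * a $ j + (if i = j \<and> i \<notin> I then a $ j else 0))"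
      unfolding matrix_vector_mult_def GM_def by (simp add: distrib_right, intro sum.cong) auto
    also have "\<dots> = (\<Sum>\<sigma>\<in>A. RR I \<sigma> x $ i * (\<Sum>j\<in>UNIV. RR I \<sigma> x $ j * a $ j)) + (if i \<notin> I then a $ i else 0)"
    proof -
      have 1: "(\<Sum>j\<in>UNIV. (\<Sum>\<sigma>\<in>A. RR I \<sigma> x $ i * RR I \<sigma> x $ j) * a $ j) = (\<Sum>\<sigma>\<in>A. RR I \<sigma> x $ i * (\<Sum>j\<in>UNIV. RR I \<sigma> x $ j * a $ j))"
        by (simp add: sum_distrib_left sum_distrib_right mult_ac sum.swap[of _ A UNIV])
      have 2: "(\<Sum>j\<in>UNIV. (if i = j \<and> i \<notin> I then a $ j else 0)) = (if i \<notin> I then a $ i else 0)"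
        by (cases "i \<in> I") (simp_all add: sum.delta)
      show ?thesis unfolding sum.distrib 1 2 ..
    qed
    also have "\<dots> = ((\<Sum>\<sigma>\<in>A. (RR I \<sigma> x \<bullet> a) *\<^sub>R RR I \<sigma> x) + (\<chi> i. if i \<notin> I then a $ i else 0)) $ i"
      by (simp add: inner_vec_def sum_component mult_ac)
    finally show ?thesis .
  qed
  then show ?thesis by (simp add: vec_eq_iff)
qed

lemma DS_iff:
  fixes I :: "'n::finite set"
  assumes "finite A"
  shows "DS I A x \<longleftrightarrow> GG I A x \<noteq> 0"
proof
  assume ds: "DS I A x"
  show "GG I A x \<noteq> 0"
  proof
    assume "GG I A x = 0"
    then have "\<not> invertible (GM I A x)" unfolding GG_def by (simp add: invertible_det_nz)
    then obtain a where a: "GM I A x *v a = 0" "a \<noteq> 0"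
      using matrix_left_invertible_ker invertible_left_inverse by metis
    have "0 = a \<bullet> (GM I A x *v a)" using a by simp
    also have "\<dots> = (\<Sum>\<sigma>\<in>A. (RR I \<sigma> x \<bullet> a)\<^sup>2) + (\<Sum>i\<in>UNIV. if i \<notin> I then (a $ i)\<^sup>2 else 0)"
    proof -
      have "a \<bullet> (\<Sum>\<sigma>\<in>A. (RR I \<sigma> x \<bullet> a) *\<^sub>R RR I \<sigma> x) = (\<Sum>\<sigma>\<in>A. (RR I \<sigma> x \<bullet> a)\<^sup>2)"
        by (simp add: inner_sum_right inner_commute power2_eq_square)
      moreover have "a \<bullet> (\<chi> i. if i \<notin> I then a $ i else 0) = (\<Sum>i\<in>UNIV. if i \<notin> I then (a $ i)\<^sup>2 else 0)"
        unfolding inner_vec_def by (intro sum.cong) (auto simp: power2_eq_square)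
      ultimately show ?thesis unfolding GM_mult inner_add_right by simp
    qed
    finally have z: "(\<Sum>\<sigma>\<in>A. (RR I \<sigma> x \<bullet> a)\<^sup>2) + (\<Sum>i\<in>UNIV. if i \<notin> I then (a $ i)\<^sup>2 else 0) = 0" by simp
    have n1: "(\<Sum>\<sigma>\<in>A. (RR I \<sigma> x \<bullet> a)\<^sup>2) \<ge> 0" by (simp add: sum_nonneg)
    have n2: "(\<Sum>i\<in>UNIV. if i \<notin> I then (a $ i)\<^sup>2 else 0) \<ge> 0" by (simp add: sum_nonneg)
    have z1: "(\<Sum>\<sigma>\<in>A. (RR I \<sigma> x \<bullet> a)\<^sup>2) = 0" using z n1 n2 by linarith
    have z2: "(\<Sum>i\<in>UNIV. if i \<notin> I then (a $ i)\<^sup>2 else 0) = 0" using z n1 n2 by linarith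
    have "\<forall>\<sigma>\<in>A. (RR I \<sigma> x \<bullet> a)\<^sup>2 = 0"
      using z1 assms by (subst (asm) sum_nonneg_eq_0_iff) auto
    then have h1: "\<forall>\<sigma>\<in>A. (\<Sum>i\<in>I. a $ i * x $ (\<sigma> i)) = 0" by (simp add: RR_dot)
    have "\<forall>i\<in>UNIV. (if i \<notin> I then (a $ i)\<^sup>2 else 0) = 0"
      using z2 by (subst (asm) sum_nonneg_eq_0_iff) auto
    then have h2: "\<forall>i. i \<notin> I \<longrightarrow> a $ i = 0" by (metis UNIV_I power_eq_0_iff zero_neq_numeral)
    show False using ds h1 h2 a(2) unfolding DS_def by blast
  qed
next
  assume g: "GG I A x \<noteq> 0"
  show "DS I A x" unfolding DS_def
  proof (intro allI impI)
    fix a :: "real^'n"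
    assume h2: "\<forall>i. i \<notin> I \<longrightarrow> a $ i = 0" and h1: "\<forall>\<sigma>\<in>A. (\<Sum>i\<in>I. a $ i * x $ (\<sigma> i)) = 0"
    have "GM I A x *v a = 0"
      unfolding GM_mult using h1 h2 by (simp add: RR_dot vec_eq_iff)
    moreover have "invertible (GM I A x)" using g unfolding GG_def by (simp add: invertible_det_nz)
    ultimately show "a = 0"
      using matrix_left_invertible_ker invertible_left_inverse by metis
  qed
qed

definition EB :: "'n set \<Rightarrow> 'n set \<Rightarrow> ('n \<Rightarrow> 'n) set" where
  "EB I J = {\<sigma>. \<sigma> \<in> extensional I \<and> bij_betw \<sigma> I J}"

lemma card_EB:
  fixes I J :: "'n::finite set"
  assumes "card I = card J"
  shows "card (EB I J) \<le> fact (card I)"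
proof -
  obtain h where h: "bij_betw h J I" using finite_same_card_bij[of J I] assms by auto
  define \<Phi> where "\<Phi> = (\<lambda>\<tau> :: 'n \<Rightarrow> 'n. (\<lambda>i. if i \<in> I then h (\<tau> i) else i))"
  have "\<Phi> ` EB I J \<subseteq> {p. p permutes I}"
  proof
    fix p assume "p \<in> \<Phi> ` EB I J"
    then obtain \<tau> where t: "\<tau> \<in> EB I J" "p = \<Phi> \<tau>" by auto
    have "bij_betw \<tau> I J" using t(1) unfolding EB_def by simp
    then have "bij_betw (h \<circ> \<tau>) I I" using h by (rule bij_betw_trans)
    moreover have "\<And>i. i \<in> I \<Longrightarrow> (h \<circ> \<tau>) i = p i" using t(2) unfolding \<Phi>_def by simp
    ultimately have "bij_betw p I I" using bij_betw_cong by blast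
    moreover have "\<And>i. i \<notin> I \<Longrightarrow> p i = i" using t(2) unfolding \<Phi>_def by simp
    ultimately show "p \<in> {p. p permutes I}" by (simp add: bij_imp_permutes)
  qed
  moreover have "inj_on \<Phi> (EB I J)"
  proof (rule inj_onI)
    fix \<tau>1 \<tau>2 assume t: "\<tau>1 \<in> EB I J" "\<tau>2 \<in> EB I J" "\<Phi> \<tau>1 = \<Phi> \<tau>2"
    show "\<tau>1 = \<tau>2"
    proof
      fix i
      show "\<tau>1 i = \<tau>2 i"
      proof (cases "i \<in> I")
        case True
        then have "h (\<tau>1 i) = h (\<tau>2 i)" using fun_cong[OF t(3), of i] unfolding \<Phi>_def by simp
        moreover have "\<tau>1 i \<in> J" "\<tau>2 i \<in> J" using t(1,2) True unfolding EB_def bij_betw_def by auto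
        ultimately show ?thesis using h unfolding bij_betw_def inj_on_def by simp
      next
        case False
        then show ?thesis using t(1,2) unfolding EB_def extensional_def by auto
      qed
    qed
  qed
  ultimately have "card (EB I J) \<le> card {p. p permutes I}"
    by (intro card_inj_on_le) (auto simp: finite_permutations)
  also have "\<dots> = fact (card I)" by (simp add: card_permutations)
  finally show ?thesis .
qed

lemma case2_DS:
  fixes I :: "'n::finite set"
  assumes j: "j \<in> I"
    and zB: "DS (I - {j}) B z" and zb: "z $ b0 \<noteq> 0"
    and Bdef: "\<forall>\<tau>\<in>B. \<exists>\<sigma>\<in>A. \<sigma> j = m \<and> \<tau> = restrict \<sigma> (I - {j})"
    and inj: "\<forall>\<sigma>\<in>A. inj_on \<sigma> I"
    and s': "\<sigma>' \<in> A" "\<sigma>' j = b0" "b0 \<noteq> m"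
  shows "DS I A (\<chi> b. if b = m then 0 else z $ b)"
  unfolding DS_def
proof (intro allI impI)
  define x :: "real^'n" where "x = (\<chi> b. if b = m then 0 else z $ b)"
  fix a :: "real^'n"
  assume h2: "\<forall>i. i \<notin> I \<longrightarrow> a $ i = 0"
    and h1': "\<forall>\<sigma>\<in>A. (\<Sum>i\<in>I. a $ i * (\<chi> b. if b = m then 0 else z $ b) $ (\<sigma> i)) = 0"
  have h1: "\<forall>\<sigma>\<in>A. (\<Sum>i\<in>I. a $ i * x $ (\<sigma> i)) = 0" using h1' unfolding x_def .
  define a' :: "real^'n" where "a' = (\<chi> i. if i = j then 0 else a $ i)"
  have c1: "\<forall>i. i \<notin> I - {j} \<longrightarrow> a' $ i = 0" using h2 unfolding a'_def by auto
  have c2: "\<forall>\<tau>\<in>B. (\<Sum>i\<in>I - {j}. a' $ i * z $ (\<tau> i)) = 0"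
  proof
    fix \<tau> assume "\<tau> \<in> B"
    then obtain \<sigma> where s: "\<sigma> \<in> A" "\<sigma> j = m" "\<tau> = restrict \<sigma> (I - {j})"
      using Bdef by blast
    have "(\<Sum>i\<in>I - {j}. a' $ i * z $ (\<tau> i)) = (\<Sum>i\<in>I - {j}. a $ i * x $ (\<sigma> i))"
    proof (rule sum.cong[OF refl])
      fix i assume i: "i \<in> I - {j}"
      have "\<sigma> i \<noteq> \<sigma> j" using inj s(1) i j unfolding inj_on_def by blast
      then have "\<sigma> i \<noteq> m" using s(2) by simp
      then show "a' $ i * z $ (\<tau> i) = a $ i * x $ (\<sigma> i)"
        using i s(3) unfolding a'_def x_def by simp
    qed
    also have "\<dots> = (\<Sum>i\<in>I. a $ i * x $ (\<sigma> i)) - a $ j * x $ (\<sigma> j)"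
      using j by (simp add: sum.remove)
    also have "\<dots> = 0" using h1 s(1,2) unfolding x_def by simp
    finally show "(\<Sum>i\<in>I - {j}. a' $ i * z $ (\<tau> i)) = 0" .
  qed
  have "a' = 0" using zB c1 c2 unfolding DS_def by blast
  then have oth: "a $ i = 0" if "i \<noteq> j" for i
  proof -
    have "a' $ i = 0" using \<open>a' = 0\<close> by simp
    then show ?thesis using that unfolding a'_def by simp
  qed
  have "0 = (\<Sum>i\<in>I. a $ i * x $ (\<sigma>' i))" using h1 s' by simp
  also have "\<dots> = a $ j * x $ (\<sigma>' j) + (\<Sum>i\<in>I - {j}. a $ i * x $ (\<sigma>' i))"
    using j by (simp add: sum.remove)
  also have "(\<Sum>i\<in>I - {j}. a $ i * x $ (\<sigma>' i)) = 0"
    using oth by (intro sum.neutral) auto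
  also have "x $ (\<sigma>' j) = z $ b0" using s' unfolding x_def by simp
  finally have "a $ j * z $ b0 = 0" by simp
  then have "a $ j = 0" using zb by simp
  show "a = 0"
  proof (rule iffD2[OF vec_eq_iff], rule allI)
    fix i show "a $ i = 0 $ i"
      using oth \<open>a $ j = 0\<close> by (cases "i = j") auto
  qed
qed

lemma case1_aj:
  fixes I :: "'n::finite set" and a :: "real^'n"
  assumes inj: "inj_on \<sigma> I" and j: "j \<in> I" and sj: "\<sigma> j = m"
    and h: "(\<Sum>i\<in>I. a $ i * (\<chi> b. if b = m then (1::real) else 2) $ (\<sigma> i)) = 0"
  shows "a $ j = 2 * (\<Sum>i\<in>I. a $ i)"
proof -
  have "(\<Sum>i\<in>I. a $ i * (\<chi> b. if b = m then (1::real) else 2) $ (\<sigma> i))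
      = (\<Sum>i\<in>I. 2 * a $ i - (if i = j then a $ i else 0))"
  proof (rule sum.cong[OF refl])
    fix i assume i: "i \<in> I"
    have e: "\<sigma> i = m \<longleftrightarrow> i = j" using inj i j sj unfolding inj_on_def by metis
    show "a $ i * (\<chi> b. if b = m then (1::real) else 2) $ (\<sigma> i) = 2 * a $ i - (if i = j then a $ i else 0)"
      using e by simp
  qed
  also have "\<dots> = (\<Sum>i\<in>I. 2 * a $ i) - (\<Sum>i\<in>I. (if i = j then a $ i else 0))"
    by (rule sum_subtractf)
  also have "\<dots> = 2 * (\<Sum>i\<in>I. a $ i) - a $ j"
    using j by (simp add: sum.delta' sum_distrib_left)
  finally show ?thesis using h by simp
qed

lemma case1:
  fixes I :: "'n::finite set"
  assumes inj: "\<forall>\<sigma>\<in>A. inj_on \<sigma> I" and cov: "\<forall>j\<in>I. \<exists>\<sigma>\<in>A. \<sigma> j = m"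
  shows "DS I A (\<chi> b. if b = m then (1::real) else 2)"
  unfolding DS_def
proof (intro allI impI)
  fix a :: "real^'n"
  assume h2: "\<forall>i. i \<notin> I \<longrightarrow> a $ i = 0"
    and h1: "\<forall>\<sigma>\<in>A. (\<Sum>i\<in>I. a $ i * (\<chi> b. if b = m then (1::real) else 2) $ (\<sigma> i)) = 0"
  define s where "s = (\<Sum>i\<in>I. a $ i)"
  have aj: "a $ j = 2 * s" if j: "j \<in> I" for j
  proof -
    obtain \<sigma> where "\<sigma> \<in> A" "\<sigma> j = m" using cov j by blast
    then show ?thesis unfolding s_def using case1_aj[of \<sigma> I j m a] inj h1 j by blast
  qed
  have "s = (\<Sum>i\<in>I. a $ i)" by (simp only: s_def)
  also have "\<dots> = (\<Sum>i\<in>I. 2 * s)" by (rule sum.cong[OF refl]) (rule aj)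
  also have "\<dots> = real (card I) * (2 * s)" by simp
  finally have "s * (2 * real (card I) - 1) = 0" by (simp add: algebra_simps)
  moreover have "2 * real (card I) - 1 \<noteq> 0"
  proof
    assume "2 * real (card I) - 1 = 0"
    then have "real (2 * card I) = real 1" by simp
    then have "2 * card I = 1" by (simp only: of_nat_eq_iff)
    then show False by presburger
  qed
  ultimately have s0: "s = 0" by simp
  show "a = 0"
  proof (rule iffD2[OF vec_eq_iff], rule allI)
    fix i show "a $ i = 0 $ i"
    proof (cases "i \<in> I")
      case True then show ?thesis using aj[OF True] s0 by simp
    next
      case False then show ?thesis using h2 by simp
    qed
  qed
qed

lemma key_lemma:
  fixes I J :: "'n::finite set"
  shows "card I = k \<Longrightarrow> card J = k \<Longrightarrow> A \<subseteq> EB I J \<Longrightarrow> fact (k - 1) < card A \<Longrightarrow> \<exists>x. DS I A x"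
proof (induction k arbitrary: I J A)
  case 0
  have "card A \<le> card (EB I J)" using 0 by (intro card_mono) auto
  also have "\<dots> \<le> fact 0" using card_EB[of I J] 0 by simp
  finally show ?case using 0 by simp
next
  case (Suc k)
  obtain m where m: "m \<in> J" using Suc.prems(2) by (metis card.empty ex_in_conv nat.simps(3))
  have bijA: "\<And>\<sigma>. \<sigma> \<in> A \<Longrightarrow> bij_betw \<sigma> I J \<and> \<sigma> \<in> extensional I" using Suc.prems(3) unfolding EB_def by auto
  have finA: "finite A" by simp
  define Aj where "Aj = (\<lambda>j. {\<sigma>\<in>A. \<sigma> j = m})"
  have uniq: "\<And>\<sigma> i j. \<sigma> \<in> A \<Longrightarrow> i \<in> I \<Longrightarrow> j \<in> I \<Longrightarrow> \<sigma> i = \<sigma> j \<Longrightarrow> i = j"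
    using bijA unfolding bij_betw_def inj_on_def by blast
  show ?case
  proof (cases "\<forall>j\<in>I. Aj j \<noteq> {}")
    case True
    have "\<forall>\<sigma>\<in>A. inj_on \<sigma> I" using bijA unfolding bij_betw_def by blast
    moreover have "\<forall>j\<in>I. \<exists>\<sigma>\<in>A. \<sigma> j = m" using True unfolding Aj_def by blast
    ultimately show ?thesis using case1 by blast
  next
    case False
    then obtain j0 where j0: "j0 \<in> I" "Aj j0 = {}" by auto
    have Aun: "A = (\<Union>j\<in>I. Aj j)"
    proof
      show "A \<subseteq> (\<Union>j\<in>I. Aj j)"
      proof
        fix \<sigma> assume s: "\<sigma> \<in> A"
        then have "m \<in> \<sigma> ` I" using bijA m unfolding bij_betw_def by auto
        then show "\<sigma> \<in> (\<Union>j\<in>I. Aj j)" using s unfolding Aj_def by auto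
      qed
    qed (auto simp: Aj_def)
    have "card A = (\<Sum>j\<in>I. card (Aj j))"
      unfolding Aun
      by (rule card_UN_disjoint) (auto simp: Aj_def dest: uniq)
    also have "\<dots> = (\<Sum>j\<in>I - {j0}. card (Aj j))"
      using j0 by (simp add: sum.remove)
    finally have cA: "card A = (\<Sum>j\<in>I - {j0}. card (Aj j))" .
    have "\<exists>j\<in>I - {j0}. fact (k - 1) < card (Aj j)"
    proof (rule ccontr)
      assume "\<not> ?thesis"
      then have "(\<Sum>j\<in>I - {j0}. card (Aj j)) \<le> (\<Sum>j\<in>I - {j0}. fact (k - 1))"
        by (intro sum_mono) (auto simp: not_less)
      also have "\<dots> = k * fact (k - 1)" using Suc.prems(1) j0 by simp
      also have "\<dots> \<le> fact k" by (cases k) auto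
      finally show False using cA Suc.prems(4) by simp
    qed
    then obtain j where j: "j \<in> I" "j \<noteq> j0" "fact (k - 1) < card (Aj j)" by auto
    define B where "B = (\<lambda>\<sigma>. restrict \<sigma> (I - {j})) ` Aj j"
    have injB: "inj_on (\<lambda>\<sigma>. restrict \<sigma> (I - {j})) (Aj j)"
    proof (rule inj_onI)
      fix \<sigma>1 \<sigma>2 assume s: "\<sigma>1 \<in> Aj j" "\<sigma>2 \<in> Aj j" "restrict \<sigma>1 (I - {j}) = restrict \<sigma>2 (I - {j})"
      show "\<sigma>1 = \<sigma>2"
      proof
        fix i
        consider "i \<in> I - {j}" | "i = j" | "i \<notin> I" using j by auto
        then show "\<sigma>1 i = \<sigma>2 i"
        proof cases
          case 1
          have "restrict \<sigma>1 (I - {j}) i = restrict \<sigma>2 (I - {j}) i" using s(3) by (rule fun_cong)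
          then show ?thesis using 1 by simp
        next
          case 2 then show ?thesis using s(1,2) unfolding Aj_def by auto
        next
          case 3
          have "\<sigma>1 \<in> A" "\<sigma>2 \<in> A" using s(1,2) unfolding Aj_def by auto
          then show ?thesis using extensional_arb[OF bijA[of \<sigma>1, THEN conjunct2] 3] extensional_arb[OF bijA[of \<sigma>2, THEN conjunct2] 3] by simp
        qed
      qed
    qed
    have cB: "card B = card (Aj j)" unfolding B_def using injB by (simp add: card_image)
    have BE: "B \<subseteq> EB (I - {j}) (J - {m})"
    proof
      fix \<tau> assume "\<tau> \<in> B"
      then obtain \<sigma> where s: "\<sigma> \<in> Aj j" "\<tau> = restrict \<sigma> (I - {j})" unfolding B_def by auto
      have bs: "bij_betw \<sigma> I J" "\<sigma> j = m" "\<sigma> \<in> A" using s bijA unfolding Aj_def by auto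
      have "bij_betw \<sigma> (I - {j}) (J - {m})"
      proof (rule bij_betw_DiffI[OF bs(1)])
        show "bij_betw \<sigma> {j} {m}" using bs(2) by (simp add: bij_betw_def)
      qed (use j m in auto)
      moreover have "bij_betw \<tau> (I - {j}) (J - {m}) = bij_betw \<sigma> (I - {j}) (J - {m})"
        by (rule bij_betw_cong) (simp add: s(2))
      ultimately have "bij_betw \<tau> (I - {j}) (J - {m})" by simp
      then show "\<tau> \<in> EB (I - {j}) (J - {m})" using s(2) unfolding EB_def by simp
    qed
    have cI: "card (I - {j}) = k" using Suc.prems(1) j by simp
    have cJ: "card (J - {m}) = k" using Suc.prems(2) m by simp
    obtain y where y: "DS (I - {j}) B y"
      using Suc.IH[OF cI cJ BE] cB j(3) by auto
    have "card B \<le> card (EB (I - {j}) (J - {m}))" by (rule card_mono[OF _ BE]) simp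
    also have "\<dots> \<le> fact k" using card_EB[of "I - {j}" "J - {m}"] cI cJ by simp
    finally have "card (Aj j) \<le> fact k" using cB by simp
    then have "Aj j \<noteq> A" using Suc.prems(4) by auto
    then obtain \<sigma>' where s': "\<sigma>' \<in> A" "\<sigma>' j \<noteq> m" unfolding Aj_def by auto
    define b0 where "b0 = \<sigma>' j"
    have "nzp (GG (I - {j}) B)"
      unfolding nzp_def using GG_poly[of B "I - {j}"] y DS_iff[of B "I - {j}" y] by auto
    moreover have "nzp (\<lambda>z::real^'n. z $ b0)"
      unfolding nzp_def using poly_fun_coord[of b0] by (auto intro!: exI[of _ "axis b0 1"])
    ultimately obtain z where "GG (I - {j}) B z * z $ b0 \<noteq> 0"
      using nzp_mult unfolding nzp_def by blast
    then have z: "DS (I - {j}) B z" "z $ b0 \<noteq> 0" using DS_iff[of B "I - {j}" z] by auto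
    have "\<forall>\<tau>\<in>B. \<exists>\<sigma>\<in>A. \<sigma> j = m \<and> \<tau> = restrict \<sigma> (I - {j})"
      unfolding B_def Aj_def by blast
    moreover have "\<forall>\<sigma>\<in>A. inj_on \<sigma> I" using bijA unfolding bij_betw_def by blast
    ultimately have "DS I A (\<chi> b. if b = m then 0 else z $ b)"
      using case2_DS[OF j(1) z(1) z(2), of A m \<sigma>'] s' unfolding b0_def by blast
    then show ?thesis by blast
  qed
qed

lemma perm_fix_iff:
  "(\<sigma> permutes (UNIV - {i0})) \<longleftrightarrow> (\<sigma> permutes UNIV \<and> \<sigma> i0 = i0)"
proof
  assume "\<sigma> permutes (UNIV - {i0})"
  then show "\<sigma> permutes UNIV \<and> \<sigma> i0 = i0"
    using permutes_subset[of \<sigma> "UNIV - {i0}" UNIV] permutes_not_in[of \<sigma> "UNIV - {i0}" i0] by auto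
next
  assume "\<sigma> permutes UNIV \<and> \<sigma> i0 = i0"
  then show "\<sigma> permutes (UNIV - {i0})"
    using permutes_superset[of \<sigma> UNIV "UNIV - {i0}"] by auto
qed

lemma orbit_eq: "sym_orbit v = (\<lambda>\<sigma>. \<chi> i. v $ (\<sigma> i)) ` {\<sigma>. \<sigma> permutes (UNIV :: 'n::finite set)}"
  unfolding sym_orbit_def by auto

lemma sum_perm_vec:
  fixes v :: "real^'n::finite"
  assumes "\<sigma> permutes UNIV"
  shows "(\<Sum>i\<in>UNIV. v $ (\<sigma> i)) = (\<Sum>i\<in>UNIV. v $ i)"
  using sum.permute[OF assms, of "\<lambda>i. v $ i"] by (simp add: comp_def)

theorem proposition1p6:
  assumes "CARD('n::finite) \<ge> 2"
  shows "\<exists>U :: (real ^ 'n) set. zariski_open U \<and> U \<noteq> {} \<and>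
    (\<forall>v\<in>U. (\<exists>H. lin_hyperplane H \<and> card (H \<inter> sym_orbit v) = fact (CARD('n) - 1)) \<and>
             (\<forall>H. lin_hyperplane H \<longrightarrow> card (H \<inter> sym_orbit v) \<le> fact (CARD('n) - 1)))"
proof -
  define N where "N = CARD('n)"
  obtain i0 i1 :: 'n where i01: "i0 \<noteq> i1"
  proof -
    have "\<not> (\<forall>a\<in>(UNIV::'n set). \<forall>b\<in>UNIV. a = b)"
      using assms card_le_Suc0_iff_eq[of "UNIV::'n set"] by auto
    then obtain i0 i1 :: 'n where "i0 \<noteq> i1" by blast
    then show ?thesis using that by blast
  qed
  define Perm where "Perm = {\<sigma>. \<sigma> permutes (UNIV :: 'n set)}"
  have finPerm: "finite Perm" unfolding Perm_def by (simp add: finite_permutations)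
  define PA where "PA = {A. A \<subseteq> Perm \<and> fact (N - 1) < card A}"
  have finPA: "finite PA" unfolding PA_def using finPerm by (simp add: finite_subset[of _ "Pow Perm"] subset_eq)
  define Pairs where "Pairs = {p :: 'n \<times> 'n. fst p \<noteq> snd p}"
  define F1 where "F1 = (\<lambda>v. \<Prod>A\<in>PA. GG UNIV A v)"
  define F2 where "F2 = (\<lambda>v::real^'n. \<Prod>p\<in>Pairs. v $ (fst p) - v $ (snd p))"
  define F3 where "F3 = (\<lambda>v::real^'n. \<Sum>i\<in>UNIV. v $ i)"
  define F4 where "F4 = (\<lambda>v::real^'n. v $ i0)"
  define F where "F = (\<lambda>v. F1 v * (F2 v * (F3 v * F4 v)))"
  have n1: "nzp F1" unfolding F1_def
  proof (rule nzp_prod[OF finPA])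
    fix A assume A: "A \<in> PA"
    then have finA: "finite A" using finPerm unfolding PA_def by (auto intro: finite_subset)
    have AE: "A \<subseteq> EB UNIV UNIV"
      using A unfolding PA_def Perm_def EB_def extensional_def by (auto simp: permutes_imp_bij)
    obtain x where "DS UNIV A x"
      using key_lemma[of "UNIV :: 'n set" N UNIV A] AE A unfolding PA_def N_def by auto
    then show "nzp (GG UNIV A)" unfolding nzp_def using GG_poly[OF finA] DS_iff[OF finA] by blast
  qed
  have n2: "nzp F2" unfolding F2_def
  proof (rule nzp_prod)
    show "finite Pairs" by simp
    fix p assume p: "p \<in> Pairs"
    have "poly_fun (\<lambda>v::real^'n. v $ (fst p) - v $ (snd p))" by (intro poly_fun_diff poly_fun_coord)
    moreover have "(axis (fst p) 1 :: real^'n) $ (fst p) - axis (fst p) 1 $ (snd p) \<noteq> 0"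
      using p unfolding Pairs_def by (simp add: axis_def)
    ultimately show "nzp (\<lambda>v::real^'n. v $ (fst p) - v $ (snd p))" unfolding nzp_def by blast
  qed
  have n3: "nzp F3" unfolding F3_def nzp_def
  proof
    show "poly_fun (\<lambda>v::real^'n. \<Sum>i\<in>UNIV. v $ i)" by (intro poly_fun_sum poly_fun_coord) simp
    have "(\<Sum>i\<in>UNIV. (axis i0 1 :: real^'n) $ i) = 1" by (simp add: axis_def)
    then show "\<exists>x::real^'n. (\<Sum>i\<in>UNIV. x $ i) \<noteq> 0" by (intro exI[of _ "axis i0 1"]) simp
  qed
  have n4: "nzp F4" unfolding F4_def nzp_def
    using poly_fun_coord[of i0] by (auto intro!: exI[of _ "axis i0 1"] simp: axis_def)
  have nF: "nzp F" unfolding F_def by (intro nzp_mult n1 n2 n3 n4)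
  define U where "U = {v. F v \<noteq> 0}"
  show ?thesis
  proof (intro exI[of _ U] conjI)
    show "zariski_open U"
      unfolding zariski_open_def zariski_closed_def U_def
      using nF unfolding nzp_def by (intro exI[of _ "{F}"]) auto
    show "U \<noteq> {}" using nF unfolding nzp_def U_def by auto
    show "\<forall>v\<in>U. (\<exists>H. lin_hyperplane H \<and> card (H \<inter> sym_orbit v) = fact (CARD('n) - 1)) \<and>
             (\<forall>H. lin_hyperplane H \<longrightarrow> card (H \<inter> sym_orbit v) \<le> fact (CARD('n) - 1))"
    proof
      fix v assume "v \<in> U"
      then have Fv: "F1 v \<noteq> 0" "F2 v \<noteq> 0" "F3 v \<noteq> 0" "F4 v \<noteq> 0" unfolding U_def F_def by auto
      have GA: "GG UNIV A v \<noteq> 0" if "A \<in> PA" for A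
        using Fv(1) that finPA unfolding F1_def by auto
      have dist: "v $ i \<noteq> v $ j" if "i \<noteq> j" for i j
      proof -
        have "(i, j) \<in> Pairs" using that unfolding Pairs_def by simp
        then show ?thesis using Fv(2) unfolding F2_def by auto
      qed
      define S where "S = (\<Sum>i\<in>UNIV. v $ i)"
      have S0: "S \<noteq> 0" using Fv(3) unfolding F3_def S_def .
      have v0: "v $ i0 \<noteq> 0" using Fv(4) unfolding F4_def .
      define f where "f = (\<lambda>\<sigma>. (\<chi> i. v $ (\<sigma> i)) :: real^'n)"
      have orb: "sym_orbit v = f ` Perm" unfolding orbit_eq f_def Perm_def ..
      have injf: "inj_on f Perm"
      proof (rule inj_onI)
        fix \<sigma>1 \<sigma>2 assume "f \<sigma>1 = f \<sigma>2"
        then have "\<forall>i. v $ (\<sigma>1 i) = v $ (\<sigma>2 i)" unfolding f_def by (simp add: vec_eq_iff)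
        show "\<sigma>1 = \<sigma>2"
        proof (rule ext, rule ccontr)
          fix i assume "\<sigma>1 i \<noteq> \<sigma>2 i"
          then have "v $ (\<sigma>1 i) \<noteq> v $ (\<sigma>2 i)" by (rule dist)
          then show False using \<open>\<forall>i. v $ (\<sigma>1 i) = v $ (\<sigma>2 i)\<close> by blast
        qed
      qed
      show "(\<exists>H. lin_hyperplane H \<and> card (H \<inter> sym_orbit v) = fact (CARD('n) - 1)) \<and>
             (\<forall>H. lin_hyperplane H \<longrightarrow> card (H \<inter> sym_orbit v) \<le> fact (CARD('n) - 1))"
      proof
        define a :: "real^'n" where "a = (\<chi> i. if i = i0 then S - v $ i0 else - (v $ i0))"
        have a0: "a \<noteq> 0"
        proof
          assume "a = 0"
          then have "a $ i1 = 0" by simp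
          then show False using i01 v0 unfolding a_def by simp
        qed
        have adot: "a \<bullet> f \<sigma> = S * (v $ (\<sigma> i0) - v $ i0)" if "\<sigma> \<in> Perm" for \<sigma>
        proof -
          have "a \<bullet> f \<sigma> = (\<Sum>i\<in>UNIV. (if i = i0 then S * v $ (\<sigma> i) else 0) - v $ i0 * v $ (\<sigma> i))"
            unfolding inner_vec_def inner_real_def
          proof (rule sum.cong[OF refl])
            fix i
            show "a $ i * f \<sigma> $ i = (if i = i0 then S * v $ (\<sigma> i) else 0) - v $ i0 * v $ (\<sigma> i)"
              unfolding a_def f_def by (cases "i = i0") (simp_all add: algebra_simps)
          qed
          also have "\<dots> = S * v $ (\<sigma> i0) - v $ i0 * (\<Sum>i\<in>UNIV. v $ (\<sigma> i))"
            by (simp add: sum_subtractf sum_distrib_left)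
          also have "(\<Sum>i\<in>UNIV. v $ (\<sigma> i)) = S"
            using sum_perm_vec[of \<sigma> v] that unfolding Perm_def S_def by simp
          finally show ?thesis by (simp add: algebra_simps)
        qed
        define H where "H = {x. a \<bullet> x = 0}"
        have "H \<inter> sym_orbit v = f ` {\<sigma>. \<sigma> permutes (UNIV - {i0})}"
        proof
          show "H \<inter> sym_orbit v \<subseteq> f ` {\<sigma>. \<sigma> permutes (UNIV - {i0})}"
          proof
            fix x assume "x \<in> H \<inter> sym_orbit v"
            then obtain \<sigma> where s: "\<sigma> \<in> Perm" "x = f \<sigma>" "a \<bullet> f \<sigma> = 0" unfolding orb H_def by auto
            then have "v $ (\<sigma> i0) = v $ i0" using adot[OF s(1)] S0 by simp
            then have "\<sigma> i0 = i0" using dist[of "\<sigma> i0" i0] by blast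
            then have "\<sigma> permutes (UNIV - {i0})" using s(1) perm_fix_iff[of \<sigma> i0] unfolding Perm_def by simp
            then show "x \<in> f ` {\<sigma>. \<sigma> permutes (UNIV - {i0})}" using s(2) by blast
          qed
          show "f ` {\<sigma>. \<sigma> permutes (UNIV - {i0})} \<subseteq> H \<inter> sym_orbit v"
          proof
            fix x assume "x \<in> f ` {\<sigma>. \<sigma> permutes (UNIV - {i0})}"
            then obtain \<sigma> where s: "\<sigma> permutes (UNIV - {i0})" "x = f \<sigma>" by auto
            then have p: "\<sigma> \<in> Perm" "\<sigma> i0 = i0" using perm_fix_iff[of \<sigma> i0] unfolding Perm_def by simp_all
            then have "a \<bullet> x = 0" using adot[OF p(1)] s(2) by simp
            then show "x \<in> H \<inter> sym_orbit v" unfolding H_def orb using s(2) p(1) by blast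
          qed
        qed
        note eqH = this
        have sub: "{\<sigma>. \<sigma> permutes (UNIV - {i0})} \<subseteq> Perm"
          unfolding Perm_def using permutes_subset[of _ "UNIV - {i0}" UNIV] by auto
        have c1: "card (f ` {\<sigma>. \<sigma> permutes (UNIV - {i0})}) = card {\<sigma>. \<sigma> permutes (UNIV - {i0})}"
          by (rule card_image[OF inj_on_subset[OF injf sub]])
        have c2: "card (UNIV - {i0}) = CARD('n) - 1" by (rule card_Diff_singleton) simp
        have c3: "card {\<sigma>. \<sigma> permutes (UNIV - {i0})} = fact (CARD('n) - 1)"
          by (rule card_permutations[OF c2]) simp
        have lin: "lin_hyperplane H" unfolding lin_hyperplane_def H_def by (rule exI[of _ a]) (simp add: a0)
        show "\<exists>H. lin_hyperplane H \<and> card (H \<inter> sym_orbit v) = fact (CARD('n) - 1)"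
          by (rule exI[of _ H], rule conjI[OF lin]) (simp only: eqH c1 c3)
      next
        show "\<forall>H. lin_hyperplane H \<longrightarrow> card (H \<inter> sym_orbit v) \<le> fact (CARD('n) - 1)"
        proof (intro allI impI)
          fix H :: "(real^'n) set" assume "lin_hyperplane H"
          then obtain a :: "real^'n" where a: "a \<noteq> 0" "H = {x. a \<bullet> x = 0}" unfolding lin_hyperplane_def by blast
          define A where "A = {\<sigma>. \<sigma> \<in> Perm \<and> a \<bullet> f \<sigma> = 0}"
          have "H \<inter> sym_orbit v \<subseteq> f ` A" unfolding a(2) orb A_def by auto
          then have c1: "card (H \<inter> sym_orbit v) \<le> card (f ` A)"
            by (rule card_mono[rotated]) (simp add: A_def finPerm)
          also have "\<dots> \<le> card A" by (rule card_image_le) (simp add: A_def finPerm)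
          finally have c2: "card (H \<inter> sym_orbit v) \<le> card A" .
          have "card A \<le> fact (N - 1)"
          proof (rule ccontr)
            assume "\<not> card A \<le> fact (N - 1)"
            then have "A \<in> PA" unfolding PA_def A_def by auto
            then have "GG UNIV A v \<noteq> 0" by (rule GA)
            moreover have finA: "finite A" unfolding A_def using finPerm by simp
            ultimately have "DS UNIV A v" using DS_iff by blast
            moreover have "\<forall>\<sigma>\<in>A. (\<Sum>i\<in>UNIV. a $ i * v $ (\<sigma> i)) = 0"
              unfolding A_def f_def inner_vec_def by simp
            ultimately have "a = 0" unfolding DS_def by blast
            then show False using a(1) by simp
          qed
          then show "card (H \<inter> sym_orbit v) \<le> fact (CARD('n) - 1)" using c2 unfolding N_def by simp
        qed
      qed
    qed
  qed
qed

end
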